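(* For every $\ell\ge0$ and every $\mathbf z=(z_1,\dots,z_{K-1})\in[0,1)^{K-1}$ at which $1-z_\kappa\zeta_+(z_1,\dots,z_\kappa)\neq0$ for all $\kappa=1,\dots,K-1$, $$G_\ell(z_1,\dots,z_{K-1})=(1-r)\,\zeta_-(z_1,\dots,z_{K-1})^{\ell}\prod_{\kappa=1}^{K-1}\frac{1-z_\kappa\,\zeta_+(z_1,\dots,z_{\kappa-1})}{1-z_\kappa\,\zeta_+(z_1,\dots,z_\kappa)}.$$ For $K=2$ this reads $G_\ell(z_1)=(1-r)\zeta_-(z_1)^\ell(1-z_1)/(1-z_1\zeta_+(z_1))$.
   Context: Fix integers $c\ge 1$, $K\ge 2$ and reals $r_1,\dots,r_K>0$ with $r=\sum_{k=1}^K r_k<1$ (here $r_k=\lambda_k/(c\mu)$ for an M/M/$c$ queue with $K$ non-preemptive priority levels, level 1 the highest, Poisson arrival rates $\lambda_k$ and common exponential service rate $\mu$). Write $\sigma_k=\sum_{j=1}^k r_j$ ($\sigma_0=0$, $\sigma_K=r$), $\mathbf e_\kappa$ for the standard unit vectors of $\mathbb Z^K$, $\delta_{ij}$ for the Kronecker delta. Consider the equations for $(p_{\mathbf n})_{\mathbf n\in\mathbb N_0^K}$, with the convention $p_{\mathbf n}=0$ if some component of $\mathbf n$ is negative: $$(1+r)p_{\mathbf n}=\Big(\prod_{j=1}^K\delta_{0n_j}\Big)p_{\mathbf n}+\sum_{\kappa=1}^K\Big[r_\kappa p_{\mathbf n-\mathbf e_\kappa}+\Big(\prod_{j=1}^{\kappa-1}\delta_{0n_j}\Big)p_{\mathbf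 n+\mathbf e_\kappa}\Big],\quad \mathbf n\in\mathbb N_0^K .$$ These are the stationary balance equations for the states in which all $c$ servers are busy and $n_\kappa$ clients of level $\kappa$ wait in the queue; their nonnegative summable solutions form a one-dimensional cone, and $P$ denotes the unique solution with $\sum_{\mathbf n}P(\mathbf n)=1$. For $\kappa=0,1,\dots,K-1$ and $z_1,\dots,z_\kappa\in[0,1]$ define $\beta(z_1,\dots,z_\kappa)=\sum_{k=1}^\kappa z_k r_{K+1-k}$ (so $\beta()=0$) and $$\zeta_\pm(z_1,\dots,z_\kappa)=\tfrac12\Big[1+r-\beta\pm\sqrt{(1+r-\beta)^2-4\sigma_{K-\kappa}}\Big],\quad \beta=\beta(z_1,\dots,z_\kappa),$$ the two real roots of $\zeta^2-(1+r-\beta)\zeta+\sigma_{K-\kappa}=0$; in particular $\zeta_+()=1$, $\zeta_-()=r$. For $\ell\ge0$ define $$G_\ell(z_1,\dots,z_{K-1})=\sum_{n_2,\dots,n_K\ge0}P(\ell,n_2,\dots,n_K)\prod_{j=2}^K z_{K+1-j}^{\,n_j},$$ so $z_1$ is paired with the lowest level $K$ and $z_{K-1}$ with level $2$. *)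

theory Defs
  imports "HOL-Analysis.Analysis"
begin

text \<open>Levels are indexed 1..K. A state n in N_0^K is a function nat => nat
  vanishing outside {1..K}. Rates r :: nat => real, used on indices 1..K.\<close>

definition states :: "nat \<Rightarrow> (nat \<Rightarrow> nat) set" where
  "states K = {n. \<forall>j. j \<notin> {1..K} \<longrightarrow> n j = 0}"

text \<open>p_{n - e_kappa}, zero if the kappa-component is 0 (negative index).\<close>
definition p_minus :: "((nat \<Rightarrow> nat) \<Rightarrow> real) \<Rightarrow> (nat \<Rightarrow> nat) \<Rightarrow> nat \<Rightarrow> real" where
  "p_minus p n k = (if n k = 0 then 0 else p (n(k := n k - 1)))"

definition p_plus :: "((nat \<Rightarrow> nat) \<Rightarrow> real) \<Rightarrow> (nat \<Rightarrow> nat) \<Rightarrow> nat \<Rightarrow> real" where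
  "p_plus p n k = p (n(k := n k + 1))"

definition kdelta :: "nat \<Rightarrow> nat \<Rightarrow> real" where
  "kdelta i j = (if i = j then 1 else 0)"

definition balance :: "nat \<Rightarrow> (nat \<Rightarrow> real) \<Rightarrow> ((nat \<Rightarrow> nat) \<Rightarrow> real) \<Rightarrow> bool" where
  "balance K r p \<longleftrightarrow> (\<forall>n \<in> states K.
     (1 + (\<Sum>k=1..K. r k)) * p n =
       (\<Prod>j=1..K. kdelta 0 (n j)) * p n
       + (\<Sum>\<kappa>=1..K. r \<kappa> * p_minus p n \<kappa>
                     + (\<Prod>j=1..\<kappa>-1. kdelta 0 (n j)) * p_plus p n \<kappa>))"

definition sigma :: "(nat \<Rightarrow> real) \<Rightarrow> nat \<Rightarrow> real" where
  "sigma r k = (\<Sum>j=1..k. r j)"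

definition beta :: "nat \<Rightarrow> (nat \<Rightarrow> real) \<Rightarrow> (nat \<Rightarrow> real) \<Rightarrow> nat \<Rightarrow> real" where
  "beta K r z \<kappa> = (\<Sum>k=1..\<kappa>. z k * r (K + 1 - k))"

definition zeta_plus :: "nat \<Rightarrow> (nat \<Rightarrow> real) \<Rightarrow> (nat \<Rightarrow> real) \<Rightarrow> nat \<Rightarrow> real" where
  "zeta_plus K r z \<kappa> =
     (let b = beta K r z \<kappa>; R = sigma r K in
      (1 + R - b + sqrt ((1 + R - b)^2 - 4 * sigma r (K - \<kappa>))) / 2)"

definition zeta_minus :: "nat \<Rightarrow> (nat \<Rightarrow> real) \<Rightarrow> (nat \<Rightarrow> real) \<Rightarrow> nat \<Rightarrow> real" where
  "zeta_minus K r z \<kappa> =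
     (let b = beta K r z \<kappa>; R = sigma r K in
      (1 + R - b - sqrt ((1 + R - b)^2 - 4 * sigma r (K - \<kappa>))) / 2)"

definition Gfun :: "nat \<Rightarrow> ((nat \<Rightarrow> nat) \<Rightarrow> real) \<Rightarrow> nat \<Rightarrow> (nat \<Rightarrow> real) \<Rightarrow> real" where
  "Gfun K P l z = (\<Sum>\<^sub>\<infinity> n \<in> {n \<in> states K. n 1 = l}.
       P n * (\<Prod>j=2..K. z (K + 1 - j) ^ n j))"

end

theory Submission
  imports Defs
begin

lemma prod_kdelta:
  assumes "finite A"
  shows "(\<Prod>j\<in>A. kdelta 0 (n j)) = (if (\<Sum>j\<in>A. n j) = 0 then 1 else 0)"
  using assms by (induct rule: finite_induct) (auto simp: kdelta_def)

lemma infsum_finsum: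
  fixes f :: "'i \<Rightarrow> 'a \<Rightarrow> real"
  assumes "finite I" "\<forall>i\<in>I. f i summable_on A"
  shows "infsum (\<lambda>x. \<Sum>i\<in>I. f i x) A = (\<Sum>i\<in>I. infsum (f i) A) \<and> (\<lambda>x. \<Sum>i\<in>I. f i x) summable_on A"
  using assms
proof (induct rule: finite_induct)
  case empty
  then show ?case by simp
next
  case (insert a F)
  then have s1: "f a summable_on A" and s2: "(\<lambda>x. \<Sum>i\<in>F. f i x) summable_on A"
    and e: "infsum (\<lambda>x. \<Sum>i\<in>F. f i x) A = (\<Sum>i\<in>F. infsum (f i) A)" by auto
  have "infsum (\<lambda>x. \<Sum>i\<in>insert a F. f i x) A = infsum (\<lambda>x. f a x + (\<Sum>i\<in>F. f i x)) A"
    using insert by simp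
  also have "\<dots> = infsum (f a) A + infsum (\<lambda>x. \<Sum>i\<in>F. f i x) A"
    by (rule infsum_add[OF s1 s2])
  finally show ?case using insert e s1 s2
    by (simp add: summable_on_add)
qed

lemma infsum_diff':
  fixes a b :: "'a \<Rightarrow> real"
  assumes "a summable_on A" "b summable_on A"
  shows "infsum (\<lambda>x. a x - b x) A = infsum a A - infsum b A \<and> (\<lambda>x. a x - b x) summable_on A"
proof -
  have u: "(\<lambda>x. - b x) summable_on A" using assms(2) by (simp add: summable_on_uminus)
  have "infsum (\<lambda>x. a x + - b x) A = infsum a A + infsum (\<lambda>x. - b x) A"
    by (rule infsum_add[OF assms(1) u])
  moreover have "(\<lambda>x. a x + - b x) summable_on A" using assms(1) u by (rule summable_on_add)
  ultimately show ?thesis by (simp add: infsum_uminus)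
qed

lemma root_seq:
  fixes h :: "nat \<Rightarrow> real" and a \<sigma> :: real
  assumes s0: "0 \<le> \<sigma>" and s1: "\<sigma> < 1" and a: "a \<ge> 1 + \<sigma>"
    and rec: "\<forall>l\<ge>1. a * h l = \<sigma> * h (l-1) + h (l+1)"
    and bd: "\<forall>l. \<bar>h l\<bar> \<le> \<sigma> ^ l"
  shows "h l = ((a - sqrt (a^2 - 4*\<sigma>))/2) ^ l * h 0"
proof -
  define d where "d = a^2 - 4*\<sigma>"
  define \<rho> where "\<rho> = (a - sqrt d)/2"
  define \<zeta> where "\<zeta> = (a + sqrt d)/2"
  have a0: "a \<ge> 0" using a s0 by simp
  have "(1+\<sigma>)^2 \<le> a^2" using a s0 by (intro power_mono) auto
  moreover have "(1+\<sigma>)^2 - 4*\<sigma> = (1-\<sigma>)^2" by (simp add: power2_eq_square algebra_simps)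
  ultimately have d0: "d \<ge> 0" unfolding d_def by (smt (verit) zero_le_power2)
  have sq: "sqrt d ^ 2 = d" using d0 by simp
  have sum: "\<rho> + \<zeta> = a" unfolding \<rho>_def \<zeta>_def by (simp add: field_simps)
  have prod: "\<rho> * \<zeta> = \<sigma>"
  proof -
    have "\<rho> * \<zeta> = (a^2 - sqrt d ^ 2)/4" unfolding \<rho>_def \<zeta>_def by (simp add: power2_eq_square algebra_simps)
    then show ?thesis using sq unfolding d_def by simp
  qed
  have z1: "\<zeta> \<ge> 1"
  proof (cases "a \<ge> 2")
    case True
    have "sqrt d \<ge> 0" using d0 by simp
    then have "a + sqrt d \<ge> 2" using True by linarith
    then show ?thesis unfolding \<zeta>_def by (simp add: field_simps del: real_sqrt_ge_0_iff)
  next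
    case False
    have "(2 - a)^2 \<le> d" unfolding d_def using a by (simp add: power2_eq_square algebra_simps)
    then have "sqrt ((2-a)^2) \<le> sqrt d" by (rule real_sqrt_le_mono)
    then have "2 - a \<le> sqrt d" using False by simp
    then show ?thesis unfolding \<zeta>_def by simp
  qed
  define D where "D l = h (l+1) - \<rho> * h l" for l
  have Dstep: "D (l+1) = \<zeta> * D l" for l
  proof -
    have "a * h (l+1) = \<sigma> * h l + h (l+2)" using rec[rule_format, of "l+1"] by simp
    then have "h (l+2) = (\<rho> + \<zeta>) * h (l+1) - \<rho> * \<zeta> * h l" using sum prod by simp
    then show ?thesis unfolding D_def by (simp add: algebra_simps)
  qed
  have Dpow: "D l = \<zeta> ^ l * D 0" for l
  proof (induct l)
    case (Suc l)
    then show ?case using Dstep[of l] by simp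
  qed simp
  have "D 0 = 0"
  proof (rule ccontr)
    assume ne: "D 0 \<noteq> 0"
    have y: "\<bar>D 0\<bar> / (1 + \<bar>\<rho>\<bar>) > 0" using ne by simp
    obtain l where l: "\<sigma> ^ l < \<bar>D 0\<bar> / (1 + \<bar>\<rho>\<bar>)" using real_arch_pow_inv[OF y s1] by blast
    have "\<bar>D 0\<bar> \<le> \<zeta> ^ l * \<bar>D 0\<bar>" using z1 one_le_power[OF z1, of l] by (simp add: mult_le_cancel_right1)
    also have "\<dots> = \<bar>D l\<bar>" using Dpow[of l] z1 by (simp add: abs_mult)
    also have "\<dots> \<le> \<bar>h (l+1)\<bar> + \<bar>\<rho>\<bar> * \<bar>h l\<bar>" unfolding D_def by (simp add: abs_mult[symmetric] abs_triangle_ineq4)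
    also have "\<dots> \<le> \<sigma> ^ (l+1) + \<bar>\<rho>\<bar> * \<sigma> ^ l"
      using bd[rule_format, of "l+1"] bd[rule_format, of l] by (intro add_mono mult_left_mono) auto
    also have "\<dots> \<le> \<sigma> ^ l + \<bar>\<rho>\<bar> * \<sigma> ^ l"
      using s0 s1 by (simp add: mult_left_le_one_le)
    also have "\<dots> = (1 + \<bar>\<rho>\<bar>) * \<sigma> ^ l" by (simp add: algebra_simps)
    also have "\<dots> < \<bar>D 0\<bar>" using l by (simp add: field_simps)
    finally show False by simp
  qed
  then have "h (l+1) = \<rho> * h l" for l using Dpow[of l] unfolding D_def by simp
  then have "h l = \<rho> ^ l * h 0" for l by (induct l) simp_all
  then show ?thesis unfolding \<rho>_def d_def .
qed

lemma infsum_lin2: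
  fixes a b :: "'a \<Rightarrow> real"
  assumes "a summable_on A" "b summable_on A"
  shows "infsum (\<lambda>n. x * a n + y * b n) A = x * infsum a A + y * infsum b A"
proof -
  have "(\<lambda>n. x * a n) summable_on A" "(\<lambda>n. y * b n) summable_on A"
    using assms by (auto intro: summable_on_cmult_right)
  then show ?thesis using assms by (simp add: infsum_add infsum_cmult_right)
qed

lemma infsum_lin4:
  fixes a b c d :: "'a \<Rightarrow> real"
  assumes "a summable_on A" "b summable_on A" "c summable_on A" "d summable_on A"
  shows "infsum (\<lambda>n. x * a n + y * b n + u * c n + v * d n) A
     = x * infsum a A + y * infsum b A + u * infsum c A + v * infsum d A"
proof -
  have s: "(\<lambda>n. x * a n) summable_on A" "(\<lambda>n. y * b n) summable_on A"
     "(\<lambda>n. u * c n) summable_on A" "(\<lambda>n. v * d n) summable_on A"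
    using assms by (auto intro: summable_on_cmult_right)
  have s2: "(\<lambda>n. x * a n + y * b n) summable_on A" using s by (intro summable_on_add)
  have s3: "(\<lambda>n. x * a n + y * b n + u * c n) summable_on A" using s s2 by (intro summable_on_add)
  have "infsum (\<lambda>n. x * a n + y * b n + u * c n + v * d n) A
     = infsum (\<lambda>n. x * a n + y * b n + u * c n) A + infsum (\<lambda>n. v * d n) A"
    by (rule infsum_add[OF s3 s(4)])
  also have "infsum (\<lambda>n. x * a n + y * b n + u * c n) A
     = infsum (\<lambda>n. x * a n + y * b n) A + infsum (\<lambda>n. u * c n) A"
    by (rule infsum_add[OF s2 s(3)])
  also have "infsum (\<lambda>n. x * a n + y * b n) A = infsum (\<lambda>n. x * a n) A + infsum (\<lambda>n. y * b n) A"
    by (rule infsum_add[OF s(1) s(2)])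
  finally show ?thesis using assms by (simp add: infsum_cmult_right)
qed

locale prio =
  fixes K :: nat and r :: "nat \<Rightarrow> real" and P :: "(nat \<Rightarrow> nat) \<Rightarrow> real" and z :: "nat \<Rightarrow> real"
  assumes K2: "K \<ge> 2"
    and rpos: "\<forall>k \<in> {1..K}. r k > 0"
    and rlt1: "(\<Sum>k=1..K. r k) < 1"
    and Pbal: "balance K r P"
    and Pnonneg: "\<forall>n \<in> states K. P n \<ge> 0"
    and Psum: "(P has_sum 1) (states K)"
    and zrange: "\<forall>\<kappa> \<in> {1..K-1}. 0 \<le> z \<kappa> \<and> z \<kappa> < 1"
begin

abbreviation SS where "SS \<equiv> states K"
definition R where "R = (\<Sum>k=1..K. r k)"
definition up :: "nat \<Rightarrow> (nat \<Rightarrow> nat) \<Rightarrow> (nat \<Rightarrow> nat)" where "up k n = n(k := n k + 1)"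
definition dn :: "nat \<Rightarrow> (nat \<Rightarrow> nat) \<Rightarrow> (nat \<Rightarrow> nat)" where "dn k n = n(k := n k - 1)"
definition St :: "nat \<Rightarrow> (nat \<Rightarrow> nat) \<Rightarrow> nat" where "St t n = (\<Sum>j=1..t. n j)"
definition cc :: "nat \<Rightarrow> (nat \<Rightarrow> nat) \<Rightarrow> real" where
  "cc k n = (if n k > 0 \<and> St (k-1) n = 0 then 1 else 0)"
definition Dl :: "(nat \<Rightarrow> nat) \<Rightarrow> real" where "Dl n = (if St K n = 0 then 1 else 0)"
definition Aop :: "((nat \<Rightarrow> nat) \<Rightarrow> real) \<Rightarrow> (nat \<Rightarrow> nat) \<Rightarrow> real" where
  "Aop f n = (1 + R - Dl n) * f n - (\<Sum>k=1..K. r k * f (up k n) + cc k n * f (dn k n))"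

lemma statesD: "n \<in> SS \<Longrightarrow> j \<notin> {1..K} \<Longrightarrow> n j = 0"
  by (simp add: states_def)

lemma up_in: "n \<in> SS \<Longrightarrow> k \<in> {1..K} \<Longrightarrow> up k n \<in> SS"
  by (auto simp: states_def up_def)
lemma dn_in: "n \<in> SS \<Longrightarrow> dn k n \<in> SS"
  by (auto simp: states_def dn_def)

lemma P_summable: "P summable_on SS" using Psum by (simp add: has_sum_iff)
lemma P_infsum: "infsum P SS = 1" using Psum by (simp add: has_sum_iff)

lemma summ:
  assumes "\<forall>n\<in>SS. \<bar>g n\<bar> \<le> C"
  shows "(\<lambda>n. P n * g n) summable_on SS"
proof -
  have "(\<lambda>n. C * P n) summable_on SS" using P_summable by (rule summable_on_cmult_right)
  then have a: "Infinite_Sum.abs_summable_on (\<lambda>n. C * P n) SS"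
    by (rule summable_on_iff_abs_summable_on_real[THEN iffD1])
  have "Infinite_Sum.abs_summable_on (\<lambda>n. P n * g n) SS"
  proof (rule Infinite_Sum.abs_summable_on_comparison_test[OF a])
    fix n assume n: "n \<in> SS"
    have p: "P n \<ge> 0" using Pnonneg n by blast
    have g: "\<bar>g n\<bar> \<le> C" using assms n by blast
    have "norm (P n * g n) = P n * \<bar>g n\<bar>" using p by (simp add: abs_mult)
    also have "\<dots> \<le> P n * C" using p g by (rule mult_left_mono[rotated])
    also have "\<dots> \<le> norm (C * P n)" by (simp add: mult.commute)
    finally show "norm (P n * g n) \<le> norm (C * P n)" .
  qed
  then show ?thesis by (rule summable_on_iff_abs_summable_on_real[THEN iffD2])
qed

lemma St_up: "k \<ge> 1 \<Longrightarrow> St t (up k n) = St t n + (if k \<le> t then 1 else 0)"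
proof -
  assume k: "k \<ge> 1"
  have "St t (up k n) = (\<Sum>j=1..t. n j + (if j = k then 1 else 0))"
    unfolding St_def up_def by (rule sum.cong) auto
  also have "\<dots> = St t n + (\<Sum>j=1..t. (if j = k then 1 else 0))"
    by (simp add: St_def sum.distrib)
  also have "(\<Sum>j=1..t. (if j = k then 1 else 0)) = (if k \<le> t then 1 else (0::nat))"
    using k by (simp add: sum.delta)
  finally show ?thesis .
qed

lemma St_dn: "k \<ge> 1 \<Longrightarrow> n k > 0 \<Longrightarrow> St t (dn k n) + (if k \<le> t then 1 else 0) = St t n"
proof -
  assume k: "k \<ge> 1" "n k > 0"
  have "up k (dn k n) = n" using k by (auto simp: up_def dn_def)
  then show ?thesis using St_up[OF k(1), of t "dn k n"] by simp
qed

lemma pre_eq: "(\<Prod>j=1..k-1. kdelta 0 (n j)) = (if St (k-1) n = 0 then 1 else 0)"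
  by (simp add: prod_kdelta St_def)

lemma Dl_eq: "(\<Prod>j=1..K. kdelta 0 (n j)) = Dl n"
  by (simp add: prod_kdelta St_def Dl_def)

lemma reidx1:
  assumes k: "k \<in> {1..K}" and f: "\<forall>n\<in>SS. \<bar>f n\<bar> \<le> C"
  shows "(\<lambda>n. f n * p_minus P n k) summable_on SS \<and>
    infsum (\<lambda>n. f n * p_minus P n k) SS = infsum (\<lambda>m. P m * f (up k m)) SS"
proof -
  let ?T = "{n\<in>SS. n k > 0}"
  have fb: "\<forall>n\<in>SS. \<bar>f (up k n)\<bar> \<le> C" using f up_in k by blast
  have s: "(\<lambda>m. P m * f (up k m)) summable_on SS" by (rule summ[OF fb])
  have e1: "infsum (\<lambda>n. f n * p_minus P n k) SS = infsum (\<lambda>n. f n * p_minus P n k) ?T"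
    by (rule infsum_cong_neutral) (auto simp: p_minus_def)
  have w1: "\<And>a. a \<in> ?T \<Longrightarrow> up k (dn k a) = a" by (auto simp: up_def dn_def)
  have w2: "\<And>a. a \<in> ?T \<Longrightarrow> dn k a \<in> SS" using dn_in by blast
  have w3: "\<And>b. b \<in> SS \<Longrightarrow> dn k (up k b) = b" by (auto simp: up_def dn_def)
  have w4: "\<And>b. b \<in> SS \<Longrightarrow> up k b \<in> ?T" using up_in k by (auto simp: up_def)
  have w5: "\<And>a. a \<in> ?T \<Longrightarrow> P (dn k a) * f (up k (dn k a)) = f a * p_minus P a k"
    using w1 by (auto simp: p_minus_def dn_def)
  have e2: "infsum (\<lambda>n. f n * p_minus P n k) ?T = infsum (\<lambda>m. P m * f (up k m)) SS"
    by (rule infsum_reindex_bij_witness[where i="up k" and j="dn k" and h="\<lambda>m. P m * f (up k m)", OF w1 w2 w3 w4 w5])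
  have s2: "(\<lambda>n. f n * p_minus P n k) summable_on ?T"
    using s summable_on_reindex_bij_witness[where i="up k" and j="dn k" and h="\<lambda>m. P m * f (up k m)", OF w1 w2 w3 w4 w5] by blast
  have s3: "(\<lambda>n. f n * p_minus P n k) summable_on SS"
    using s2 by (rule summable_on_cong_neutral[THEN iffD1, rotated -1]) (auto simp: p_minus_def)
  show ?thesis using e1 e2 s3 by simp
qed


lemma reidx2:
  assumes k: "k \<in> {1..K}" and f: "\<forall>n\<in>SS. \<bar>f n\<bar> \<le> C"
  shows "(\<lambda>n. f n * (if St (k-1) n = 0 then 1 else 0) * P (up k n)) summable_on SS \<and>
    infsum (\<lambda>n. f n * (if St (k-1) n = 0 then 1 else 0) * P (up k n)) SS
     = infsum (\<lambda>m. P m * (cc k m * f (dn k m))) SS"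
proof -
  let ?T = "{n\<in>SS. n k > 0}"
  let ?h = "\<lambda>m. P m * (cc k m * f (dn k m))"
  let ?g = "\<lambda>n. f n * (if St (k-1) n = 0 then 1 else 0) * P (up k n)"
  have hb: "\<forall>n\<in>SS. \<bar>cc k n * f (dn k n)\<bar> \<le> C"
  proof
    fix n assume n: "n \<in> SS"
    have "\<bar>f (dn k n)\<bar> \<le> C" using f dn_in n by blast
    moreover have "C \<ge> 0" using f n by force
    ultimately show "\<bar>cc k n * f (dn k n)\<bar> \<le> C" by (simp add: cc_def)
  qed
  have s: "?h summable_on SS" by (rule summ[OF hb])
  have sT: "?h summable_on ?T"
    using s by (rule summable_on_cong_neutral[THEN iffD1, rotated -1]) (auto simp: cc_def)
  have e1: "infsum ?h SS = infsum ?h ?T"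
    by (rule infsum_cong_neutral) (auto simp: cc_def)
  have w1: "\<And>a. a \<in> SS \<Longrightarrow> dn k (up k a) = a" by (auto simp: up_def dn_def)
  have w2: "\<And>a. a \<in> SS \<Longrightarrow> up k a \<in> ?T" using up_in k by (auto simp: up_def)
  have w3: "\<And>b. b \<in> ?T \<Longrightarrow> up k (dn k b) = b" by (auto simp: up_def dn_def)
  have w4: "\<And>b. b \<in> ?T \<Longrightarrow> dn k b \<in> SS" using dn_in by blast
  have w5: "\<And>a. a \<in> SS \<Longrightarrow> ?h (up k a) = ?g a"
  proof -
    fix a assume a: "a \<in> SS"
    have "St (k-1) (up k a) = St (k-1) a" using k St_up[of k "k-1" a] by auto
    then have "cc k (up k a) = (if St (k-1) a = 0 then 1 else 0)" by (simp add: cc_def up_def)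
    then show "?h (up k a) = ?g a" using w1[OF a] by simp
  qed
  have e2: "infsum ?g SS = infsum ?h ?T"
    by (rule infsum_reindex_bij_witness[where i="dn k" and j="up k" and h="?h", OF w1 w2 w3 w4 w5])
  have s2: "?g summable_on SS"
    using sT summable_on_reindex_bij_witness[where i="dn k" and j="up k" and h="?h", OF w1 w2 w3 w4 w5] by blast
  show ?thesis using e1 e2 s2 by simp
qed

lemma bal_pt:
  assumes n: "n \<in> SS"
  shows "(1 + R - Dl n) * P n = (\<Sum>k=1..K. r k * p_minus P n k + (if St (k-1) n = 0 then 1 else 0) * P (up k n))"
proof -
  have "(1 + R) * P n = Dl n * P n + (\<Sum>k=1..K. r k * p_minus P n k + (if St (k-1) n = 0 then 1 else 0) * P (up k n))"
    using Pbal n unfolding balance_def Dl_eq pre_eq p_plus_def up_def[symmetric] R_def by blast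
  then show ?thesis by (simp add: algebra_simps)
qed

lemma adjoint:
  assumes f: "\<forall>n\<in>SS. \<bar>f n\<bar> \<le> C"
  shows "infsum (\<lambda>n. P n * Aop f n) SS = 0"
proof -
  define F where "F = (\<lambda>k n. r k * (f n * p_minus P n k) + f n * (if St (k-1) n = 0 then 1 else 0) * P (up k n))"
  define G where "G = (\<lambda>k m. r k * (P m * f (up k m)) + P m * (cc k m * f (dn k m)))"
  have FG: "\<forall>k\<in>{1..K}. F k summable_on SS \<and> G k summable_on SS \<and> infsum (F k) SS = infsum (G k) SS"
  proof
    fix k assume k: "k \<in> {1..K}"
    note A = reidx1[OF k f] and B = reidx2[OF k f]
    have a1: "(\<lambda>n. r k * (f n * p_minus P n k)) summable_on SS"
      using A by (simp add: summable_on_cmult_right)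
    have a2: "(\<lambda>m. r k * (P m * f (up k m))) summable_on SS"
      using summ[of "\<lambda>m. f (up k m)" C] f up_in[OF _ k] by (simp add: summable_on_cmult_right)
    have b2: "(\<lambda>m. P m * (cc k m * f (dn k m))) summable_on SS"
    proof (rule summ)
      show "\<forall>n\<in>SS. \<bar>cc k n * f (dn k n)\<bar> \<le> C"
      proof
        fix n assume n: "n \<in> SS"
        have "\<bar>f (dn k n)\<bar> \<le> C" using f dn_in n by blast
        moreover have "C \<ge> 0" using f n by force
        ultimately show "\<bar>cc k n * f (dn k n)\<bar> \<le> C" by (simp add: cc_def)
      qed
    qed
    have sF: "F k summable_on SS" unfolding F_def using a1 B by (intro summable_on_add) auto
    have sG: "G k summable_on SS" unfolding G_def using a2 b2 by (intro summable_on_add) auto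
    have "infsum (F k) SS = r k * infsum (\<lambda>n. f n * p_minus P n k) SS
        + infsum (\<lambda>n. f n * (if St (k-1) n = 0 then 1 else 0) * P (up k n)) SS"
      unfolding F_def using a1 B A by (subst infsum_add) (auto simp: infsum_cmult_right)
    also have "\<dots> = r k * infsum (\<lambda>m. P m * f (up k m)) SS + infsum (\<lambda>m. P m * (cc k m * f (dn k m))) SS"
      using A B by simp
    also have "\<dots> = infsum (G k) SS"
      unfolding G_def using a2 b2 summ[of "\<lambda>m. f (up k m)" C] f up_in[OF _ k] by (subst infsum_add) (auto simp: infsum_cmult_right)
    finally show "F k summable_on SS \<and> G k summable_on SS \<and> infsum (F k) SS = infsum (G k) SS"
      using sF sG by simp
  qed
  have sumF: "infsum (\<lambda>n. \<Sum>k\<in>{1..K}. F k n) SS = (\<Sum>k\<in>{1..K}. infsum (F k) SS)"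
    and sF: "(\<lambda>n. \<Sum>k\<in>{1..K}. F k n) summable_on SS"
    using infsum_finsum[of "{1..K}" F SS] FG by auto
  have sumG: "infsum (\<lambda>n. \<Sum>k\<in>{1..K}. G k n) SS = (\<Sum>k\<in>{1..K}. infsum (G k) SS)"
    and sG: "(\<lambda>n. \<Sum>k\<in>{1..K}. G k n) summable_on SS"
    using infsum_finsum[of "{1..K}" G SS] FG by auto
  have pt: "P n * Aop f n = (\<Sum>k\<in>{1..K}. F k n) - (\<Sum>k\<in>{1..K}. G k n)" if n: "n \<in> SS" for n
  proof -
    have "P n * ((1 + R - Dl n) * f n) = f n * ((1 + R - Dl n) * P n)" by simp
    also have "\<dots> = (\<Sum>k\<in>{1..K}. F k n)"
      unfolding bal_pt[OF n] F_def by (simp add: sum_distrib_left algebra_simps)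
    finally have 1: "P n * ((1 + R - Dl n) * f n) = (\<Sum>k\<in>{1..K}. F k n)" .
    have 2: "P n * (\<Sum>k=1..K. r k * f (up k n) + cc k n * f (dn k n)) = (\<Sum>k\<in>{1..K}. G k n)"
      unfolding G_def by (simp add: sum_distrib_left algebra_simps)
    show ?thesis unfolding Aop_def using 1 2 by (simp add: right_diff_distrib)
  qed
  have "infsum (\<lambda>n. P n * Aop f n) SS = infsum (\<lambda>n. (\<Sum>k\<in>{1..K}. F k n) - (\<Sum>k\<in>{1..K}. G k n)) SS"
    using pt by (rule infsum_cong)
  also have "\<dots> = 0"
    using infsum_diff'[OF sF sG] sumF sumG FG by simp
  finally show ?thesis .
qed


definition W :: "nat \<Rightarrow> real" where "W j = z (K + 1 - j)"
definition mono :: "nat \<Rightarrow> (nat \<Rightarrow> nat) \<Rightarrow> real" where "mono t n = (\<Prod>j=t+1..K. W j ^ n j)"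

lemma W_bounds: "j \<in> {2..K} \<Longrightarrow> 0 \<le> W j \<and> W j \<le> 1"
proof -
  assume j: "j \<in> {2..K}"
  then have "K + 1 - j \<in> {1..K-1}" by auto
  then show ?thesis using zrange unfolding W_def by force
qed

lemma mono_bounds: "t \<ge> 1 \<Longrightarrow> 0 \<le> mono t n \<and> mono t n \<le> 1"
proof -
  assume t: "t \<ge> 1"
  have b: "\<And>j. j \<in> {t+1..K} \<Longrightarrow> 0 \<le> W j ^ n j \<and> W j ^ n j \<le> 1"
    using W_bounds t by (simp add: power_le_one)
  show ?thesis unfolding mono_def using b
    by (auto intro!: prod_nonneg prod_le_1)
qed

lemma St_mono: "t \<le> u \<Longrightarrow> St t n \<le> St u n"
  unfolding St_def by (rule sum_mono2) auto

lemma St_pos_iff: "St t n > 0 \<longleftrightarrow> (\<exists>j\<in>{1..t}. n j > 0)"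
  unfolding St_def by (auto simp: sum_eq_0_iff simp flip: neq0_conv)

lemma St_Suc: "St (Suc t) n = St t n + n (Suc t)"
  unfolding St_def by simp

lemma St_dn_high: "k > t \<Longrightarrow> St t (dn k n) = St t n"
  unfolding St_def dn_def by (rule sum.cong) auto

lemma St_dn_low: "k \<ge> 1 \<Longrightarrow> k \<le> t \<Longrightarrow> n k > 0 \<Longrightarrow> St t (dn k n) = St t n - 1"
  using St_dn[of k n t] by simp

lemma cc_high: "k > t \<Longrightarrow> cc k n \<noteq> 0 \<Longrightarrow> St t n = 0"
  using St_mono[of t "k-1" n] by (auto simp: cc_def split: if_splits)

lemma cc_unique: "1 \<le> k1 \<Longrightarrow> k1 < k2 \<Longrightarrow> cc k1 n \<noteq> 0 \<Longrightarrow> cc k2 n \<noteq> 0 \<Longrightarrow> False"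
proof -
  assume a: "1 \<le> k1" "k1 < k2" "cc k1 n \<noteq> 0" "cc k2 n \<noteq> 0"
  then have "n k1 > 0" "St (k2 - 1) n = 0" by (auto simp: cc_def split: if_splits)
  moreover have "k1 \<in> {1..k2-1}" using a by auto
  ultimately show False using St_pos_iff[of "k2-1" n] by auto
qed

lemma cc_exists:
  assumes "St t n > 0" shows "\<exists>k\<in>{1..t}. cc k n = 1"
proof -
  obtain j where j: "j \<in> {1..t}" "n j > 0" using assms St_pos_iff by blast
  define k where "k = (LEAST i. 1 \<le> i \<and> 0 < n i)"
  have k1: "1 \<le> k \<and> 0 < n k" unfolding k_def by (rule LeastI[of _ j]) (use j in auto)
  have kj: "k \<le> j" unfolding k_def by (rule Least_le) (use j in auto)
  have "\<not> (\<exists>i\<in>{1..k-1}. n i > 0)"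
  proof
    assume "\<exists>i\<in>{1..k-1}. n i > 0"
    then obtain i where i: "i \<in> {1..k-1}" "n i > 0" by blast
    then have "k \<le> i" unfolding k_def by (intro Least_le) auto
    then show False using i k1 by auto
  qed
  then have "St (k-1) n = 0" using St_pos_iff[of "k-1" n] by auto
  then have "cc k n = 1" using k1 by (simp add: cc_def)
  then show ?thesis using k1 kj j by auto
qed

lemma cc_zero_low: "St t n = 0 \<Longrightarrow> k \<in> {1..t} \<Longrightarrow> cc k n = 0"
  using St_pos_iff[of t n] by (auto simp: cc_def)

lemma cc_sum_uniform:
  assumes "\<forall>k\<in>{1..t}. cc k n \<noteq> 0 \<longrightarrow> g k = v"
  shows "(\<Sum>k=1..t. cc k n * g k) = (if St t n > 0 then v else 0)"
proof (cases "St t n > 0")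
  case False
  then show ?thesis using cc_zero_low[of t n] by simp
next
  case True
  obtain k0 where k0: "k0 \<in> {1..t}" "cc k0 n = 1" using cc_exists[OF True] by blast
  have "(\<Sum>k=1..t. cc k n * g k) = cc k0 n * g k0 + (\<Sum>k\<in>{1..t} - {k0}. cc k n * g k)"
    using k0 by (simp add: sum.remove)
  also have "(\<Sum>k\<in>{1..t} - {k0}. cc k n * g k) = 0"
  proof (rule sum.neutral, rule ballI)
    fix k assume k: "k \<in> {1..t} - {k0}"
    have "cc k n = 0"
    proof (rule ccontr)
      assume c: "cc k n \<noteq> 0"
      show False
      proof (cases "k < k0")
        case True then show False using cc_unique[of k k0 n] k k0 c by auto
      next
        case False then have "k0 < k" using k by auto
        then show False using cc_unique[of k0 k n] k k0 c by auto
      qed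
    qed
    then show "cc k n * g k = 0" by simp
  qed
  finally show ?thesis using k0 assms True by simp
qed

lemma sum_split:
  assumes "t \<le> K" shows "(\<Sum>k=1..K. h k) = (\<Sum>k=1..t. h k) + (\<Sum>k=t+1..K. h (k::nat)) "
proof -
  have "{1..K} = {1..t} \<union> {t+1..K}" using assms by auto
  then show ?thesis by (simp add: sum.union_disjoint)
qed

lemma mono_up_high: "k \<in> {t+1..K} \<Longrightarrow> mono t (up k n) = W k * mono t n"
proof -
  assume k: "k \<in> {t+1..K}"
  have "mono t (up k n) = (\<Prod>j=t+1..K. W j ^ n j * (if j = k then W j else 1))"
    unfolding mono_def up_def by (rule prod.cong) auto
  also have "\<dots> = mono t n * (\<Prod>j=t+1..K. (if j = k then W j else 1))"
    unfolding mono_def by (simp add: prod.distrib)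
  also have "(\<Prod>j=t+1..K. (if j = k then W j else 1)) = W k"
    using k by (simp add: prod.delta)
  finally show ?thesis by simp
qed

lemma mono_up_low: "k \<notin> {t+1..K} \<Longrightarrow> mono t (up k n) = mono t n"
  unfolding mono_def up_def by (rule prod.cong) auto

lemma mono_dn_low: "k \<notin> {t+1..K} \<Longrightarrow> mono t (dn k n) = mono t n"
  unfolding mono_def dn_def by (rule prod.cong) auto

lemma mono_step: "t + 1 \<le> K \<Longrightarrow> mono t m = W (t+1) ^ m (t+1) * mono (t+1) m"
  unfolding mono_def by (simp add: prod.atLeast_Suc_atMost)

lemma mono_K: "mono K n = 1"
  unfolding mono_def by simp

lemma Dl_St: "Dl n \<noteq> 0 \<Longrightarrow> t \<le> K \<Longrightarrow> St t n = 0"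
  using St_mono[of t K n] by (auto simp: Dl_def split: if_splits)

lemma Dl_mono: "Dl n \<noteq> 0 \<Longrightarrow> mono t n = 1"
proof -
  assume d: "Dl n \<noteq> 0"
  have "\<forall>j\<in>{1..K}. n j = 0" using d St_pos_iff[of K n] by (auto simp: Dl_def split: if_splits)
  then show ?thesis unfolding mono_def by (intro prod.neutral) auto
qed


definition bt :: "nat \<Rightarrow> real" where "bt t = (\<Sum>k=t+1..K. r k * W k)"
definition gg :: "nat \<Rightarrow> (nat \<Rightarrow> nat) \<Rightarrow> real" where
  "gg t n = (\<Sum>k=t+1..K. cc k n * mono t (dn k n))"
definition phi :: "nat \<Rightarrow> (nat \<Rightarrow> nat) \<Rightarrow> real" where
  "phi t n = (if St t n = 0 then 1 else 0) * mono t n"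

lemma R_split: "t \<le> K \<Longrightarrow> R - sigma r t = (\<Sum>k=t+1..K. r k)"
  using sum_split[of t r] unfolding R_def sigma_def by simp

lemma Aop_split:
  assumes "t \<le> K"
  shows "Aop f n = (1 + R - Dl n) * f n - (\<Sum>k=1..t. r k * f (up k n)) - (\<Sum>k=t+1..K. r k * f (up k n))
     - (\<Sum>k=1..t. cc k n * f (dn k n)) - (\<Sum>k=t+1..K. cc k n * f (dn k n))"
  unfolding Aop_def sum.distrib using sum_split[OF assms, of "\<lambda>k. r k * f (up k n)"]
    sum_split[OF assms, of "\<lambda>k. cc k n * f (dn k n)"] by simp

lemma Aop_cut:
  assumes t: "1 \<le> t" "t \<le> K"
  shows "Aop (\<lambda>m. if St t m \<ge> l+1 then 1 else 0) n
     = (if St t n = l+1 then 1 else 0) - sigma r t * (if St t n = l then 1 else 0)"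
proof -
  define f :: "(nat \<Rightarrow> nat) \<Rightarrow> real" where "f = (\<lambda>m. if St t m \<ge> l+1 then 1 else 0)"
  have u1: "(\<Sum>k=1..t. r k * f (up k n)) = sigma r t * (if St t n \<ge> l then 1 else 0)"
  proof -
    have "(\<Sum>k=1..t. r k * f (up k n)) = (\<Sum>k=1..t. r k * (if St t n \<ge> l then 1 else 0))"
      by (rule sum.cong) (auto simp: f_def St_up)
    then show ?thesis by (simp add: sigma_def sum_distrib_right)
  qed
  have u2: "(\<Sum>k=t+1..K. r k * f (up k n)) = (R - sigma r t) * f n"
  proof -
    have "(\<Sum>k=t+1..K. r k * f (up k n)) = (\<Sum>k=t+1..K. r k * f n)"
      by (rule sum.cong) (auto simp: f_def St_up)
    then show ?thesis using R_split[OF t(2)] by (simp add: sum_distrib_right)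
  qed
  have c1: "(\<Sum>k=1..t. cc k n * f (dn k n)) = (if St t n \<ge> l+2 then 1 else 0)"
  proof -
    have "(\<Sum>k=1..t. cc k n * f (dn k n)) = (if St t n > 0 then (if St t n - 1 \<ge> l+1 then 1 else 0) else 0)"
    proof (rule cc_sum_uniform, intro ballI impI)
      fix k assume k: "k \<in> {1..t}" "cc k n \<noteq> 0"
      then have "n k > 0" by (auto simp: cc_def split: if_splits)
      then show "f (dn k n) = (if St t n - 1 \<ge> l+1 then 1 else 0)" using k St_dn_low[of k t n] by (simp add: f_def)
    qed
    then show ?thesis by auto
  qed
  have c2: "(\<Sum>k=t+1..K. cc k n * f (dn k n)) = 0"
  proof (rule sum.neutral, rule ballI)
    fix k assume k: "k \<in> {t+1..K}"
    show "cc k n * f (dn k n) = 0"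
    proof (cases "cc k n = 0")
      case False
      then have "St t n = 0" using cc_high[of t k n] k by auto
      then show ?thesis using St_dn_high[of t k n] k by (simp add: f_def)
    qed simp
  qed
  have d: "Dl n * f n = 0"
  proof (cases "Dl n = 0")
    case False
    then have "St t n = 0" using Dl_St[of n t] t by auto
    then show ?thesis by (simp add: f_def)
  qed simp
  have "Aop f n = (1 + R) * f n - Dl n * f n - sigma r t * (if St t n \<ge> l then 1 else 0) - (R - sigma r t) * f n
     - (if St t n \<ge> l+2 then 1 else 0)"
    using Aop_split[OF t(2), of f n] u1 u2 c1 c2 by (simp add: algebra_simps)
  also have "\<dots> = (if St t n = l+1 then 1 else 0) - sigma r t * (if St t n = l then 1 else 0)"
    unfolding d unfolding f_def by (auto simp: algebra_simps)
  finally show ?thesis unfolding f_def .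
qed

lemma Aop_rec:
  assumes t: "1 \<le> t" "t \<le> K" and l: "l \<ge> 1"
  shows "Aop (\<lambda>m. (if St t m = l then 1 else 0) * mono t m) n
     = (1 + R - bt t) * ((if St t n = l then 1 else 0) * mono t n)
       - sigma r t * ((if St t n = l - 1 then 1 else 0) * mono t n)
       - (if St t n = l + 1 then 1 else 0) * mono t n"
proof -
  define f :: "(nat \<Rightarrow> nat) \<Rightarrow> real" where "f = (\<lambda>m. (if St t m = l then 1 else 0) * mono t m)"
  have u1: "(\<Sum>k=1..t. r k * f (up k n)) = sigma r t * ((if St t n = l - 1 then 1 else 0) * mono t n)"
  proof -
    have "(\<Sum>k=1..t. r k * f (up k n)) = (\<Sum>k=1..t. r k * ((if St t n = l - 1 then 1 else 0) * mono t n))"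
      by (rule sum.cong) (use l in \<open>auto simp: f_def St_up mono_up_low\<close>)
    then show ?thesis by (simp add: sigma_def sum_distrib_right)
  qed
  have u2: "(\<Sum>k=t+1..K. r k * f (up k n)) = bt t * f n"
  proof -
    have "(\<Sum>k=t+1..K. r k * f (up k n)) = (\<Sum>k=t+1..K. r k * W k * f n)"
      by (rule sum.cong) (auto simp: f_def St_up mono_up_high)
    then show ?thesis by (simp add: bt_def sum_distrib_right)
  qed
  have c1: "(\<Sum>k=1..t. cc k n * f (dn k n)) = (if St t n = l + 1 then 1 else 0) * mono t n"
  proof -
    have "(\<Sum>k=1..t. cc k n * f (dn k n)) = (if St t n > 0 then (if St t n - 1 = l then 1 else 0) * mono t n else 0)"
    proof (rule cc_sum_uniform, intro ballI impI)
      fix k assume k: "k \<in> {1..t}" "cc k n \<noteq> 0"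
      then have "n k > 0" by (auto simp: cc_def split: if_splits)
      then show "f (dn k n) = (if St t n - 1 = l then 1 else 0) * mono t n"
        using k St_dn_low[of k t n] mono_dn_low[of k t n] by (simp add: f_def)
    qed
    then show ?thesis by auto
  qed
  have c2: "(\<Sum>k=t+1..K. cc k n * f (dn k n)) = 0"
  proof (rule sum.neutral, rule ballI)
    fix k assume k: "k \<in> {t+1..K}"
    show "cc k n * f (dn k n) = 0"
    proof (cases "cc k n = 0")
      case False
      then have "St t n = 0" using cc_high[of t k n] k by auto
      then show ?thesis using St_dn_high[of t k n] k l by (simp add: f_def)
    qed simp
  qed
  have d: "Dl n * f n = 0"
  proof (cases "Dl n = 0")
    case False
    then have "St t n = 0" using Dl_St[of n t] t by auto
    then show ?thesis using l by (simp add: f_def)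
  qed simp
  have "Aop f n = (1 + R) * f n - Dl n * f n - sigma r t * ((if St t n = l - 1 then 1 else 0) * mono t n)
     - bt t * f n - (if St t n = l + 1 then 1 else 0) * mono t n"
    using Aop_split[OF t(2), of f n] u1 u2 c1 c2 by (simp add: algebra_simps)
  then show ?thesis unfolding d by (simp add: f_def algebra_simps)
qed

lemma Aop_E:
  assumes t: "1 \<le> t" "t \<le> K"
  shows "Aop (phi t) n = (1 + R - bt t) * phi t n - Dl n - (if St t n = 1 then 1 else 0) * mono t n - gg t n"
proof -
  define f where "f = phi t"
  have u1: "(\<Sum>k=1..t. r k * f (up k n)) = 0"
    by (rule sum.neutral) (auto simp: f_def phi_def St_up)
  have u2: "(\<Sum>k=t+1..K. r k * f (up k n)) = bt t * f n"
  proof -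
    have "(\<Sum>k=t+1..K. r k * f (up k n)) = (\<Sum>k=t+1..K. r k * W k * f n)"
      by (rule sum.cong) (auto simp: f_def phi_def St_up mono_up_high)
    then show ?thesis by (simp add: bt_def sum_distrib_right)
  qed
  have c1: "(\<Sum>k=1..t. cc k n * f (dn k n)) = (if St t n = 1 then 1 else 0) * mono t n"
  proof -
    have "(\<Sum>k=1..t. cc k n * f (dn k n)) = (if St t n > 0 then (if St t n - 1 = 0 then 1 else 0) * mono t n else 0)"
    proof (rule cc_sum_uniform, intro ballI impI)
      fix k assume k: "k \<in> {1..t}" "cc k n \<noteq> 0"
      then have "n k > 0" by (auto simp: cc_def split: if_splits)
      then show "f (dn k n) = (if St t n - 1 = 0 then 1 else 0) * mono t n"
        using k St_dn_low[of k t n] mono_dn_low[of k t n] by (simp add: f_def phi_def)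
    qed
    then show ?thesis by auto
  qed
  have c2: "(\<Sum>k=t+1..K. cc k n * f (dn k n)) = gg t n"
    unfolding gg_def
  proof (rule sum.cong[OF refl])
    fix k assume k: "k \<in> {t+1..K}"
    show "cc k n * f (dn k n) = cc k n * mono t (dn k n)"
    proof (cases "cc k n = 0")
      case False
      then have "St t n = 0" using cc_high[of t k n] k by auto
      then show ?thesis using St_dn_high[of t k n] k by (simp add: f_def phi_def)
    qed simp
  qed
  have d: "Dl n * f n = Dl n"
  proof (cases "Dl n = 0")
    case False
    then show ?thesis using Dl_St[of n t] Dl_mono[of n t] t by (simp add: f_def phi_def)
  qed simp
  have "Aop f n = (1 + R) * f n - Dl n * f n - bt t * f n - (if St t n = 1 then 1 else 0) * mono t n - gg t n"
    using Aop_split[OF t(2), of f n] u1 u2 c1 c2 by (simp add: algebra_simps)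
  then show ?thesis unfolding d by (simp add: f_def algebra_simps)
qed

lemma gg_rel:
  assumes t: "1 \<le> t" "t + 1 \<le> K"
  shows "W (t+1) * (gg t n - gg (t+1) n) = phi t n - phi (t+1) n"
proof -
  have split: "gg t n = cc (t+1) n * mono t (dn (t+1) n) + (\<Sum>k=t+2..K. cc k n * mono t (dn k n))"
    unfolding gg_def using t by (simp add: sum.atLeast_Suc_atMost)
  have rest: "(\<Sum>k=t+2..K. cc k n * mono t (dn k n)) = gg (t+1) n"
    unfolding gg_def
  proof (rule sum.cong)
    fix k assume k: "k \<in> {t + 1 + 1..K}"
    show "cc k n * mono t (dn k n) = cc k n * mono (t+1) (dn k n)"
    proof (cases "cc k n = 0")
      case False
      then have "St (t+1) n = 0" using cc_high[of "t+1" k n] k by auto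
      then have "n (t+1) = 0" using St_Suc[of t n] by simp
      then have "dn k n (t+1) = 0" using k by (simp add: dn_def)
      then show ?thesis using mono_step[OF t(2), of "dn k n"] by simp
    qed simp
  qed simp
  show ?thesis
  proof (cases "cc (t+1) n = 0")
    case True
    then have "\<not> (n (t+1) > 0 \<and> St t n = 0)" by (auto simp: cc_def split: if_splits)
    then have "phi t n = phi (t+1) n"
      using St_Suc[of t n] mono_step[OF t(2), of n] by (auto simp: phi_def)
    then show ?thesis using split rest True by simp
  next
    case False
    then have c: "n (t+1) > 0" "St t n = 0" "cc (t+1) n = 1" by (auto simp: cc_def split: if_splits)
    have "phi (t+1) n = 0" using c St_Suc[of t n] by (simp add: phi_def)
    moreover have "phi t n = W (t+1) ^ n (t+1) * mono (t+1) n"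
      using c mono_step[OF t(2), of n] by (simp add: phi_def)
    moreover have "mono t (dn (t+1) n) = W (t+1) ^ (n (t+1) - 1) * mono (t+1) n"
      using mono_step[OF t(2), of "dn (t+1) n"] mono_dn_low[of "t+1" "t+1" n] by (simp add: dn_def)
    moreover have "W (t+1) * W (t+1) ^ (n (t+1) - 1) = W (t+1) ^ n (t+1)"
      using c(1) by (metis Suc_diff_1 power_Suc)
    ultimately show ?thesis using split rest c by (simp add: algebra_simps)
  qed
qed


definition H :: "nat \<Rightarrow> nat \<Rightarrow> real" where
  "H t l = infsum (\<lambda>n. P n * ((if St t n = l then 1 else 0) * mono t n)) SS"
definition M :: "nat \<Rightarrow> nat \<Rightarrow> real" where
  "M t l = infsum (\<lambda>n. P n * (if St t n = l then 1 else 0)) SS"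
definition Tg :: "nat \<Rightarrow> real" where "Tg t = infsum (\<lambda>n. P n * gg t n) SS"
definition p0 :: real where "p0 = infsum (\<lambda>n. P n * Dl n) SS"

lemma sH: "t \<ge> 1 \<Longrightarrow> (\<lambda>n. P n * ((if St t n = l then 1 else 0) * mono t n)) summable_on SS"
  by (rule summ[where C=1]) (use mono_bounds in auto)
lemma sM: "(\<lambda>n. P n * (if St t n = l then 1 else 0)) summable_on SS"
  by (rule summ[where C=1]) auto
lemma sD: "(\<lambda>n. P n * Dl n) summable_on SS"
  by (rule summ[where C=1]) (auto simp: Dl_def)
lemma sphi: "t \<ge> 1 \<Longrightarrow> (\<lambda>n. P n * phi t n) summable_on SS"
  unfolding phi_def by (rule sH)
lemma H0_phi: "H t 0 = infsum (\<lambda>n. P n * phi t n) SS"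
  unfolding H_def phi_def ..

lemma gg_bound: "t \<ge> 1 \<Longrightarrow> \<bar>gg t n\<bar> \<le> real K"
proof -
  assume t: "t \<ge> 1"
  have "\<bar>gg t n\<bar> \<le> (\<Sum>k=t+1..K. \<bar>cc k n * mono t (dn k n)\<bar>)"
    unfolding gg_def by (rule sum_abs)
  also have "\<dots> \<le> (\<Sum>k=t+1..K. 1)"
    by (rule sum_mono) (use mono_bounds[OF t] in \<open>auto simp: cc_def abs_mult\<close>)
  also have "\<dots> \<le> real K" by simp
  finally show ?thesis .
qed

lemma sG: "t \<ge> 1 \<Longrightarrow> (\<lambda>n. P n * gg t n) summable_on SS"
  by (rule summ[where C="real K"]) (use gg_bound in auto)

lemma cut:
  assumes t: "1 \<le> t" "t \<le> K"
  shows "M t (l+1) = sigma r t * M t l"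
proof -
  have "0 = infsum (\<lambda>n. P n * Aop (\<lambda>m. if St t m \<ge> l+1 then 1 else 0) n) SS"
    by (rule adjoint[where C=1, symmetric]) auto
  also have "\<dots> = infsum (\<lambda>n. 1 * (P n * (if St t n = l+1 then 1 else 0)) + (- sigma r t) * (P n * (if St t n = l then 1 else 0))) SS"
    by (rule infsum_cong) (subst Aop_cut[OF t], simp add: algebra_simps)
  also have "\<dots> = M t (l+1) - sigma r t * M t l"
    unfolding M_def by (subst infsum_lin2[OF sM sM]) simp
  finally show ?thesis by simp
qed

lemma recH:
  assumes t: "1 \<le> t" "t \<le> K" and l: "l \<ge> 1"
  shows "(1 + R - bt t) * H t l = sigma r t * H t (l-1) + H t (l+1)"
proof -
  have "0 = infsum (\<lambda>n. P n * Aop (\<lambda>m. (if St t m = l then 1 else 0) * mono t m) n) SS"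
    by (rule adjoint[where C=1, symmetric]) (use mono_bounds t in auto)
  also have "\<dots> = infsum (\<lambda>n. (1 + R - bt t) * (P n * ((if St t n = l then 1 else 0) * mono t n))
       + (- sigma r t) * (P n * ((if St t n = l - 1 then 1 else 0) * mono t n))
       + (-1) * (P n * ((if St t n = l + 1 then 1 else 0) * mono t n))
       + 0 * (P n * ((if St t n = l + 1 then 1 else 0) * mono t n))) SS"
    by (rule infsum_cong) (subst Aop_rec[OF t l], simp add: algebra_simps)
  also have "\<dots> = (1 + R - bt t) * H t l - sigma r t * H t (l-1) - H t (l+1)"
    unfolding H_def by (subst infsum_lin4[OF sH sH sH sH]) (use t in simp_all)
  finally show ?thesis by simp
qed

lemma E_rel:
  assumes t: "1 \<le> t" "t \<le> K"
  shows "(1 + R - bt t) * H t 0 = p0 + H t 1 + Tg t"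
proof -
  have pb: "\<forall>n\<in>SS. \<bar>phi t n\<bar> \<le> 1" using mono_bounds t by (auto simp: phi_def)
  have "0 = infsum (\<lambda>n. P n * Aop (phi t) n) SS"
    by (rule adjoint[OF pb, symmetric])
  also have "\<dots> = infsum (\<lambda>n. (1 + R - bt t) * (P n * phi t n) + (-1) * (P n * Dl n)
       + (-1) * (P n * ((if St t n = 1 then 1 else 0) * mono t n))
       + (-1) * (P n * gg t n)) SS"
    by (rule infsum_cong) (subst Aop_E[OF t], simp add: algebra_simps)
  also have "\<dots> = (1 + R - bt t) * H t 0 - p0 - H t 1 - Tg t"
    unfolding H0_phi
    by (subst infsum_lin4[OF sphi sD sH sG]) (use t in \<open>simp_all add: H_def Tg_def p0_def\<close>)
  finally show ?thesis by simp
qed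

lemma T_rel:
  assumes t: "1 \<le> t" "t + 1 \<le> K"
  shows "W (t+1) * (Tg t - Tg (t+1)) = H t 0 - H (t+1) 0"
proof -
  have "W (t+1) * (Tg t - Tg (t+1)) = infsum (\<lambda>n. W (t+1) * (P n * gg t n) + (- W (t+1)) * (P n * gg (t+1) n)) SS"
    unfolding Tg_def by (subst infsum_lin2[OF sG sG]) (use t in \<open>simp_all add: algebra_simps\<close>)
  also have "\<dots> = infsum (\<lambda>n. 1 * (P n * phi t n) + (-1) * (P n * phi (t+1) n)) SS"
  proof (rule infsum_cong)
    fix n
    have "W (t+1) * (gg t n - gg (t+1) n) = phi t n - phi (t+1) n" by (rule gg_rel[OF t])
    then have "P n * (W (t+1) * (gg t n - gg (t+1) n)) = P n * (phi t n - phi (t+1) n)" by simp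
    then show "W (t+1) * (P n * gg t n) + (- W (t+1)) * (P n * gg (t+1) n) = 1 * (P n * phi t n) + (-1) * (P n * phi (t+1) n)"
      by (simp add: algebra_simps)
  qed
  also have "\<dots> = H t 0 - H (t+1) 0"
    unfolding H0_phi by (subst infsum_lin2[OF sphi sphi]) (use t in simp_all)
  finally show ?thesis .
qed

lemma Tg_K: "Tg K = 0"
  unfolding Tg_def gg_def by simp


lemma R_eq: "R = sigma r K" unfolding R_def sigma_def ..

lemma sigma_bounds: "1 \<le> t \<Longrightarrow> t \<le> K \<Longrightarrow> 0 \<le> sigma r t \<and> sigma r t < 1 \<and> bt t \<le> R - sigma r t"
proof -
  assume t: "1 \<le> t" "t \<le> K"
  have r0: "0 \<le> r k" if k: "k \<in> {1..K}" for k
  proof -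
    have "r k > 0" using rpos k by blast
    then show ?thesis by simp
  qed
  have s0: "0 \<le> sigma r t" unfolding sigma_def using r0 t by (intro sum_nonneg) auto
  have rest: "R - sigma r t = (\<Sum>k=t+1..K. r k)" by (rule R_split[OF t(2)])
  have rest0: "0 \<le> (\<Sum>k=t+1..K. r k)" using r0 t by (intro sum_nonneg) auto
  have "sigma r t < 1" using rest rest0 rlt1 unfolding R_def by linarith
  moreover have "bt t \<le> (\<Sum>k=t+1..K. r k)"
    unfolding bt_def
  proof (rule sum_mono)
    fix k assume k: "k \<in> {t+1..K}"
    then have "0 \<le> W k \<and> W k \<le> 1" using W_bounds t by auto
    moreover have "0 \<le> r k" using r0 k t by auto
    ultimately show "r k * W k \<le> r k" by (simp add: mult_left_le)
  qed
  ultimately show ?thesis using s0 rest by simp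
qed

lemma M_pow: "1 \<le> t \<Longrightarrow> t \<le> K \<Longrightarrow> M t l = sigma r t ^ l * M t 0"
proof (induct l)
  case (Suc l)
  then show ?case using cut[of t l] by simp
qed simp

lemma M0_bounds: "0 \<le> M t 0 \<and> M t 0 \<le> 1"
proof
  show "0 \<le> M t 0" unfolding M_def by (rule infsum_nonneg) (use Pnonneg in auto)
  have "M t 0 \<le> infsum P SS"
    unfolding M_def by (rule infsum_mono[OF sM P_summable]) (use Pnonneg in auto)
  then show "M t 0 \<le> 1" using P_infsum by simp
qed

lemma H_bounds: "1 \<le> t \<Longrightarrow> t \<le> K \<Longrightarrow> \<bar>H t l\<bar> \<le> sigma r t ^ l"
proof -
  assume t: "1 \<le> t" "t \<le> K"
  have h0: "0 \<le> H t l" unfolding H_def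
    by (rule infsum_nonneg) (use Pnonneg mono_bounds t in auto)
  have "H t l \<le> M t l" unfolding H_def M_def
  proof (rule infsum_mono[OF sH sM])
    fix n assume n: "n \<in> SS"
    have "(if St t n = l then 1 else 0) * mono t n \<le> (if St t n = l then 1 else (0::real))"
      using mono_bounds[of t n] t by auto
    then show "P n * ((if St t n = l then 1 else 0) * mono t n) \<le> P n * (if St t n = l then 1 else 0)"
      using Pnonneg n by (intro mult_left_mono) auto
  qed (use t in auto)
  also have "\<dots> = sigma r t ^ l * M t 0" by (rule M_pow[OF t])
  also have "\<dots> \<le> sigma r t ^ l" using M0_bounds[of t] sigma_bounds[OF t] by (simp add: mult_left_le)
  finally show ?thesis using h0 by simp
qed

definition Aa :: "nat \<Rightarrow> real" where "Aa t = 1 + R - bt t"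
definition rho :: "nat \<Rightarrow> real" where "rho t = (Aa t - sqrt (Aa t ^ 2 - 4 * sigma r t)) / 2"
definition Z :: "nat \<Rightarrow> real" where "Z t = (Aa t + sqrt (Aa t ^ 2 - 4 * sigma r t)) / 2"

lemma H_pow:
  assumes t: "1 \<le> t" "t \<le> K"
  shows "H t l = rho t ^ l * H t 0"
  unfolding rho_def
proof (rule root_seq)
  show "0 \<le> sigma r t" "sigma r t < 1" using sigma_bounds[OF t] by auto
  show "1 + sigma r t \<le> Aa t" using sigma_bounds[OF t] unfolding Aa_def by linarith
  show "\<forall>l\<ge>1. Aa t * H t l = sigma r t * H t (l - 1) + H t (l + 1)"
    using recH[OF t] unfolding Aa_def by blast
  show "\<forall>l. \<bar>H t l\<bar> \<le> sigma r t ^ l" using H_bounds[OF t] by blast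
qed

lemma Z_H:
  assumes t: "1 \<le> t" "t \<le> K"
  shows "Z t * H t 0 = p0 + Tg t"
proof -
  have z: "Z t = (1 + R - bt t) - rho t" unfolding Z_def rho_def Aa_def by (simp add: field_simps)
  have "H t 1 = rho t * H t 0" using H_pow[OF t, of 1] by simp
  then have e: "(1 + R - bt t) * H t 0 = p0 + rho t * H t 0 + Tg t" using E_rel[OF t] by simp
  have "Z t * H t 0 = (1 + R - bt t) * H t 0 - rho t * H t 0" unfolding z by (simp add: algebra_simps)
  then show ?thesis using e by simp
qed

lemma prod_rel:
  assumes t: "1 \<le> t" "t + 1 \<le> K"
  shows "H t 0 * (1 - W (t+1) * Z t) = H (t+1) 0 * (1 - W (t+1) * Z (t+1))"
proof -
  have a: "Z t * H t 0 = p0 + Tg t" using Z_H t by auto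
  have b: "Z (t+1) * H (t+1) 0 = p0 + Tg (t+1)" using Z_H t by auto
  have c: "W (t+1) * (Tg t - Tg (t+1)) = H t 0 - H (t+1) 0" by (rule T_rel[OF t])
  have "W (t+1) * (Z t * H t 0 - Z (t+1) * H (t+1) 0) = H t 0 - H (t+1) 0"
    using a b c by simp
  then show ?thesis by (simp add: algebra_simps)
qed

lemma Z_K: "Z K = 1"
proof -
  have "bt K = 0" unfolding bt_def by simp
  then have A: "Aa K = 1 + R" unfolding Aa_def by simp
  have "R < 1" using rlt1 unfolding R_def .
  have "(1 + R)^2 - 4 * R = (1 - R)^2" by (simp add: power2_eq_square algebra_simps)
  then have "sqrt (Aa K ^ 2 - 4 * sigma r K) = 1 - R" using A \<open>R < 1\<close> by (simp add: R_eq[symmetric])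
  then show ?thesis unfolding Z_def A by simp
qed

lemma H_K0: "H K 0 = p0"
  unfolding H_def p0_def by (rule infsum_cong) (simp add: mono_K Dl_def)

definition Tl :: "nat \<Rightarrow> real" where "Tl l = infsum (\<lambda>n. P n * (if St K n \<ge> l then 1 else 0)) SS"

lemma sTl: "(\<lambda>n. P n * (if St K n \<ge> l then 1 else 0)) summable_on SS"
  by (rule summ[where C=1]) auto

lemma tail_sum: "Tl l + (\<Sum>i<l. M K i) = 1"
proof (induct l)
  case 0
  have "Tl 0 = infsum P SS" unfolding Tl_def by simp
  then show ?case using P_infsum by simp
next
  case (Suc l)
  have "Tl l = infsum (\<lambda>n. 1 * (P n * (if St K n \<ge> Suc l then 1 else 0)) + 1 * (P n * (if St K n = l then 1 else 0))) SS"
    unfolding Tl_def by (rule infsum_cong) auto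
  also have "\<dots> = Tl (Suc l) + M K l"
    unfolding Tl_def M_def by (subst infsum_lin2[OF sTl sM]) simp
  finally show ?case using Suc by simp
qed

lemma tail_lim: "Tl \<longlonglongrightarrow> 0"
proof (rule LIMSEQ_I)
  fix e :: real assume e: "0 < e"
  obtain F where F: "finite F" "F \<subseteq> SS" "dist (sum P F) (infsum P SS) \<le> e/2"
    using infsum_finite_approximation[OF P_summable, of "e/2"] e by auto
  define N where "N = (\<Sum>n\<in>F. St K n) + 1"
  have "\<forall>l\<ge>N. norm (Tl l - 0) < e"
  proof (intro allI impI)
    fix l assume l: "l \<ge> N"
    have t0: "0 \<le> Tl l" unfolding Tl_def by (rule infsum_nonneg) (use Pnonneg in auto)
    have "1 = infsum (\<lambda>n. 1 * (P n * (if St K n \<ge> l then 1 else 0)) + 1 * (P n * (if St K n < l then 1 else 0))) SS"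
    proof -
      have "infsum (\<lambda>n. 1 * (P n * (if St K n \<ge> l then 1 else 0)) + 1 * (P n * (if St K n < l then 1 else 0))) SS
          = infsum P SS" by (rule infsum_cong) auto
      then show ?thesis using P_infsum by simp
    qed
    also have "\<dots> = Tl l + infsum (\<lambda>n. P n * (if St K n < l then 1 else 0)) SS"
      unfolding Tl_def by (subst infsum_lin2[OF sTl summ[where C=1]]) auto
    finally have sp: "Tl l = 1 - infsum (\<lambda>n. P n * (if St K n < l then 1 else 0)) SS" by simp
    have "sum (\<lambda>n. P n * (if St K n < l then 1 else 0)) F \<le> infsum (\<lambda>n. P n * (if St K n < l then 1 else 0)) SS"
      by (rule finite_sum_le_infsum[OF summ[where C=1] F(1) F(2)]) (use Pnonneg in auto)
    moreover have "sum (\<lambda>n. P n * (if St K n < l then 1 else 0)) F = sum P F"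
    proof (rule sum.cong[OF refl])
      fix n assume n: "n \<in> F"
      have "St K n \<le> (\<Sum>n\<in>F. St K n)" by (rule member_le_sum[OF n _ F(1)]) auto
      then have "St K n < l" using l unfolding N_def by simp
      then show "P n * (if St K n < l then 1 else 0) = P n" by simp
    qed
    moreover have "1 - sum P F \<le> e/2"
    proof -
      have "\<bar>sum P F - 1\<bar> \<le> e/2" using F(3) P_infsum by (simp add: dist_real_def)
      then show ?thesis by (smt (verit))
    qed
    ultimately have "Tl l \<le> e/2" using sp by simp
    then show "norm (Tl l - 0) < e" using t0 e by simp
  qed
  then show "\<exists>no. \<forall>l\<ge>no. norm (Tl l - 0) < e" by blast
qed

lemma p0_val: "p0 = 1 - R"
proof -
  have p0M: "p0 = M K 0" unfolding p0_def M_def by (rule infsum_cong) (simp add: Dl_def)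
  have K1: "1 \<le> K" using K2 by simp
  have R1: "R < 1" using rlt1 unfolding R_def .
  have R0: "0 \<le> R" using sigma_bounds[OF K1 order_refl] R_eq by simp
  have geo: "(\<Sum>i<l. M K i) = M K 0 * ((1 - R^l) / (1 - R))" for l
  proof -
    have "(\<Sum>i<l. M K i) = (\<Sum>i<l. R^i * M K 0)"
      by (rule sum.cong[OF refl]) (use M_pow[OF K1 order_refl] R_eq in metis)
    also have "\<dots> = (\<Sum>i<l. R^i) * M K 0" by (simp add: sum_distrib_right)
    finally have "(\<Sum>i<l. M K i) = (\<Sum>i<l. R^i) * M K 0" .
    then show ?thesis using R1 by (simp add: sum_gp_strict)
  qed
  have "(\<lambda>l. 1 - Tl l) \<longlonglongrightarrow> 1 - 0" by (intro tendsto_intros tail_lim)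
  moreover have "(\<lambda>l. 1 - Tl l) = (\<lambda>l. M K 0 * ((1 - R^l) / (1 - R)))"
  proof
    fix l show "1 - Tl l = M K 0 * ((1 - R^l) / (1 - R))" using tail_sum[of l] geo[of l] by linarith
  qed
  ultimately have l1: "(\<lambda>l. M K 0 * ((1 - R^l) / (1 - R))) \<longlonglongrightarrow> 1" by simp
  have l0: "(\<lambda>l. R^l) \<longlonglongrightarrow> 0" by (intro LIMSEQ_power_zero) (use R0 R1 in simp)
  have "(\<lambda>l. 1 - R^l) \<longlonglongrightarrow> 1 - 0" by (rule tendsto_diff[OF tendsto_const l0])
  then have "(\<lambda>l. (1 - R^l) / (1 - R)) \<longlonglongrightarrow> (1 - 0) / (1 - R)"
    by (rule tendsto_divide[OF _ tendsto_const]) (use R1 in simp)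
  then have l2: "(\<lambda>l. M K 0 * ((1 - R^l) / (1 - R))) \<longlonglongrightarrow> M K 0 * ((1 - 0) / (1 - R))"
    by (rule tendsto_mult_left)
  have "M K 0 * ((1 - 0) / (1 - R)) = 1" using LIMSEQ_unique[OF l2 l1] .
  then show ?thesis using p0M R1 by (simp add: field_simps)
qed


lemma H_prod:
  assumes nz: "\<forall>s\<in>{1..K-1}. 1 - W (s+1) * Z s \<noteq> 0"
  shows "1 \<le> t \<Longrightarrow> t \<le> K \<Longrightarrow>
    H t 0 = p0 * (\<Prod>s=t..K-1. (1 - W (s+1) * Z (s+1)) / (1 - W (s+1) * Z s))"
proof -
  have "\<forall>t. K - t = d \<longrightarrow> 1 \<le> t \<longrightarrow> t \<le> K \<longrightarrow>
    H t 0 = p0 * (\<Prod>s=t..K-1. (1 - W (s+1) * Z (s+1)) / (1 - W (s+1) * Z s))" for d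
  proof (induct d)
    case 0
    show ?case
    proof (intro allI impI)
      fix t assume t: "K - t = 0" "1 \<le> t" "t \<le> K"
      then have "t = K" by simp
      then show "H t 0 = p0 * (\<Prod>s=t..K-1. (1 - W (s+1) * Z (s+1)) / (1 - W (s+1) * Z s))"
        using H_K0 t by simp
    qed
  next
    case (Suc d)
    show ?case
    proof (intro allI impI)
      fix t assume t: "K - t = Suc d" "1 \<le> t" "t \<le> K"
      then have t1: "t + 1 \<le> K" "K - (t+1) = d" by auto
      have IH: "H (t+1) 0 = p0 * (\<Prod>s=t+1..K-1. (1 - W (s+1) * Z (s+1)) / (1 - W (s+1) * Z s))"
        using Suc t1 t by auto
      have ne: "1 - W (t+1) * Z t \<noteq> 0" using nz t1 t by auto
      have "H t 0 = H (t+1) 0 * ((1 - W (t+1) * Z (t+1)) / (1 - W (t+1) * Z t))"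
        using prod_rel[OF t(2) t1(1)] ne by (simp add: field_simps)
      also have "\<dots> = p0 * (((1 - W (t+1) * Z (t+1)) / (1 - W (t+1) * Z t)) *
          (\<Prod>s=t+1..K-1. (1 - W (s+1) * Z (s+1)) / (1 - W (s+1) * Z s)))"
        unfolding IH by (simp add: algebra_simps)
      also have "((1 - W (t+1) * Z (t+1)) / (1 - W (t+1) * Z t)) *
          (\<Prod>s=t+1..K-1. (1 - W (s+1) * Z (s+1)) / (1 - W (s+1) * Z s))
          = (\<Prod>s=t..K-1. (1 - W (s+1) * Z (s+1)) / (1 - W (s+1) * Z s))"
        using t1 by (subst prod.atLeast_Suc_atMost[of t "K-1"]) auto
      finally show "H t 0 = p0 * (\<Prod>s=t..K-1. (1 - W (s+1) * Z (s+1)) / (1 - W (s+1) * Z s))" .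
    qed
  qed
  then show "1 \<le> t \<Longrightarrow> t \<le> K \<Longrightarrow> ?thesis" by blast
qed

lemma bt_beta: "t \<le> K \<Longrightarrow> bt t = beta K r z (K - t)"
  unfolding bt_def beta_def W_def
  by (rule sum.reindex_bij_witness[where j="\<lambda>a. K + 1 - a" and i="\<lambda>b. K + 1 - b"]) auto

lemma Z_zeta: "t \<le> K \<Longrightarrow> Z t = zeta_plus K r z (K - t)"
  unfolding Z_def Aa_def zeta_plus_def Let_def using bt_beta[of t] R_eq by simp

lemma rho_zeta: "1 \<le> K \<Longrightarrow> rho 1 = zeta_minus K r z (K - 1)"
  unfolding rho_def Aa_def zeta_minus_def Let_def using bt_beta[of 1] R_eq by simp

lemma Gfun_H: "Gfun K P l z = H 1 l"
  unfolding Gfun_def H_def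
proof (rule infsum_cong_neutral)
  fix n assume "n \<in> SS - {n \<in> SS. n 1 = l}"
  then show "P n * ((if St 1 n = l then 1 else 0) * mono 1 n) = 0" by (simp add: St_def)
next
  fix n assume "n \<in> {n \<in> SS. n 1 = l} \<inter> SS"
  then show "P n * (\<Prod>j=2..K. z (K + 1 - j) ^ n j) = P n * ((if St 1 n = l then 1 else 0) * mono 1 n)"
    by (simp add: St_def mono_def W_def numeral_2_eq_2)
qed auto

lemma final:
  assumes znz: "\<forall>\<kappa> \<in> {1..K-1}. 1 - z \<kappa> * zeta_plus K r z \<kappa> \<noteq> 0"
  shows "Gfun K P l z =
     (1 - (\<Sum>k=1..K. r k)) * zeta_minus K r z (K - 1) ^ l *
     (\<Prod>\<kappa>=1..K-1. (1 - z \<kappa> * zeta_plus K r z (\<kappa> - 1)) / (1 - z \<kappa> * zeta_plus K r z \<kappa>))"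
proof -
  have K1: "1 \<le> K" using K2 by simp
  have Wz: "W (s+1) = z (K - s)" for s unfolding W_def by simp
  have nz: "\<forall>s\<in>{1..K-1}. 1 - W (s+1) * Z s \<noteq> 0"
  proof
    fix s assume s: "s \<in> {1..K-1}"
    then have "K - s \<in> {1..K-1}" by auto
    then have "1 - z (K - s) * zeta_plus K r z (K - s) \<noteq> 0" using znz by blast
    moreover have "Z s = zeta_plus K r z (K - s)" using s by (intro Z_zeta) auto
    ultimately show "1 - W (s+1) * Z s \<noteq> 0" unfolding Wz by simp
  qed
  have "Gfun K P l z = rho 1 ^ l * H 1 0" unfolding Gfun_H by (rule H_pow[OF order_refl K1])
  also have "\<dots> = rho 1 ^ l * (p0 * (\<Prod>s=1..K-1. (1 - W (s+1) * Z (s+1)) / (1 - W (s+1) * Z s)))"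
    using H_prod[OF nz order_refl K1] by simp
  also have "(\<Prod>s=1..K-1. (1 - W (s+1) * Z (s+1)) / (1 - W (s+1) * Z s))
     = (\<Prod>\<kappa>=1..K-1. (1 - z \<kappa> * zeta_plus K r z (\<kappa> - 1)) / (1 - z \<kappa> * zeta_plus K r z \<kappa>))"
  proof (rule prod.reindex_bij_witness[where j="\<lambda>s. K - s" and i="\<lambda>k. K - k"])
    fix s assume s: "s \<in> {1..K-1}"
    have "Z (s+1) = zeta_plus K r z (K - (s + 1))" using s by (intro Z_zeta) auto
    then have "Z (s+1) = zeta_plus K r z (K - s - 1)" by simp
    moreover have "Z s = zeta_plus K r z (K - s)" using s by (intro Z_zeta) auto
    ultimately show "(1 - z (K - s) * zeta_plus K r z (K - s - 1)) / (1 - z (K - s) * zeta_plus K r z (K - s))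
        = (1 - W (s+1) * Z (s+1)) / (1 - W (s+1) * Z s)" using Wz by simp
  qed auto
  finally have "Gfun K P l z = rho 1 ^ l * (p0 *
     (\<Prod>\<kappa>=1..K-1. (1 - z \<kappa> * zeta_plus K r z (\<kappa> - 1)) / (1 - z \<kappa> * zeta_plus K r z \<kappa>)))" .
  then show ?thesis unfolding p0_val rho_zeta[OF K1] R_def by (simp only: ac_simps)
qed

end

theorem mainTheorem2:
  fixes K :: nat and r :: "nat \<Rightarrow> real" and P :: "(nat \<Rightarrow> nat) \<Rightarrow> real"
    and l :: nat and z :: "nat \<Rightarrow> real"
  assumes K2: "K \<ge> 2"
    and rpos: "\<forall>k \<in> {1..K}. r k > 0"
    and rlt1: "(\<Sum>k=1..K. r k) < 1"
    and Pbal: "balance K r P"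
    and Pnonneg: "\<forall>n \<in> states K. P n \<ge> 0"
    and Psum: "(P has_sum 1) (states K)"
    and zrange: "\<forall>\<kappa> \<in> {1..K-1}. 0 \<le> z \<kappa> \<and> z \<kappa> < 1"
    and znz: "\<forall>\<kappa> \<in> {1..K-1}. 1 - z \<kappa> * zeta_plus K r z \<kappa> \<noteq> 0"
  shows "Gfun K P l z =
     (1 - (\<Sum>k=1..K. r k)) * zeta_minus K r z (K - 1) ^ l *
     (\<Prod>\<kappa>=1..K-1. (1 - z \<kappa> * zeta_plus K r z (\<kappa> - 1)) / (1 - z \<kappa> * zeta_plus K r z \<kappa>))"
proof -
  interpret prio K r P z
    using K2 rpos rlt1 Pbal Pnonneg Psum zrange by unfold_locales
  show ?thesis by (rule final[OF znz])
qed

end
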